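(* For all integers $n,a,b$, $$J\mathcal{G}_{n+a}^{(3)}J\mathcal{G}_{n+b}^{(3)}-J\mathcal{G}_{n}^{(3)}J\mathcal{G}_{n+a+b}^{(3)}=\frac{1}{49}\Big\{2^{n+1}\left[\Theta Y_{n+b}(a)-2^{b}Y_{n}(a)\Theta\right]+X_{a}\left[X_{b}\Xi-14X_{b+2}\Omega\right]\Big\}$$ and $$K\mathcal{G}_{n+a}^{(3)}K\mathcal{G}_{n+b}^{(3)}-K\mathcal{G}_{n}^{(3)}K\mathcal{G}_{n+a+b}^{(3)}=2^{n}\left[\Theta Y^{*}_{n+b}(a)-2^{b}Y^{*}_{n}(a)\Theta\right]+X_{a}\left[X_{b}\Xi^{*}-6X_{b+2}\Omega\right],$$ where $Y_{n}(a)=X_{n}(2^{a}\mathbf{A}+X_{a+2}\mathbf{A}-X_{a}\mathbf{B})-X_{n+1}(2^{a}\mathbf{B}+X_{a}\mathbf{A}-X_{a+1}\mathbf{B})$, $Y^{*}_{n}(a)=X_{n}(2^{a}\mathbf{C}+X_{a+2}\mathbf{C}-X_{a}\mathbf{D})-X_{n+1}(2^{a}\mathbf{D}+X_{a}\mathbf{C}-X_{a+1}\mathbf{D})$, $\Xi=\mathbf{A}^2+\mathbf{A}\mathbf{B}+\mathbf{B}^2$ and $\Xi^{*}=\mathbf{C}^2+\mathbf{C}\mathbf{D}+\mathbf{D}^2$.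
   Context: Fix real numbers $\lambda_1,\lambda_2,\lambda_3$. The algebra $\mathbb{H}_{\lambda_1,\lambda_2,\lambda_3}$ of 3-parameter generalized quaternions is the real associative algebra of elements $\psi_0+\psi_1\mathbf{e}_1+\psi_2\mathbf{e}_2+\psi_3\mathbf{e}_3$ ($\psi_i\in\mathbb{R}$) with $\mathbf{e}_1^2=-\lambda_1\lambda_2$, $\mathbf{e}_2^2=-\lambda_1\lambda_3$, $\mathbf{e}_3^2=-\lambda_2\lambda_3$, $\mathbf{e}_1\mathbf{e}_2=-\mathbf{e}_2\mathbf{e}_1=\lambda_1\mathbf{e}_3$, $\mathbf{e}_1\mathbf{e}_3=-\mathbf{e}_3\mathbf{e}_1=-\lambda_2\mathbf{e}_2$, $\mathbf{e}_2\mathbf{e}_3=-\mathbf{e}_3\mathbf{e}_2=\lambda_3\mathbf{e}_1$. The third-order Jacobsthal numbers satisfy $J_0^{(3)}=0$, $J_1^{(3)}=J_2^{(3)}=1$, $J_n^{(3)}=J_{n-1}^{(3)}+J_{n-2}^{(3)}+2J_{n-3}^{(3)}$; the modified third-order Jacobsthal numbers satisfy $K_0^{(3)}=3$, $K_1^{(3)}=1$, $K_2^{(3)}=3$, $K_n^{(3)}=K_{n-1}^{(3)}+K_{n-2}^{(3)}+2K_{n-3}^{(3)}$; both are extended to all integers $n$ by running the recurrence backwards (equivalently by the Binet formulas $J_n^{(3)}=\frac17[2^{n+1}+X_n-2X_{n+1}]$, $K_n^{(3)}=2^n+X_n+2X_{n+1}$, which are rational-valued for negative $n$). For all integers $n$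 define $J\mathcal{G}_n^{(3)}=J_n^{(3)}+J_{n+1}^{(3)}\mathbf{e}_1+J_{n+2}^{(3)}\mathbf{e}_2+J_{n+3}^{(3)}\mathbf{e}_3$ and $K\mathcal{G}_n^{(3)}=K_n^{(3)}+K_{n+1}^{(3)}\mathbf{e}_1+K_{n+2}^{(3)}\mathbf{e}_2+K_{n+3}^{(3)}\mathbf{e}_3$. Here $X_n=0,1,-1$ according as $n\equiv0,1,2\pmod 3$ (for all integers $n$), $\Theta=1+2\mathbf{e}_1+4\mathbf{e}_2+8\mathbf{e}_3$, $\mathbf{A}=1+2\mathbf{e}_1-3\mathbf{e}_2+\mathbf{e}_3$, $\mathbf{B}=2-3\mathbf{e}_1+\mathbf{e}_2+2\mathbf{e}_3$, $\mathbf{C}=1-2\mathbf{e}_1+\mathbf{e}_2+\mathbf{e}_3$, $\mathbf{D}=-2+\mathbf{e}_1+\mathbf{e}_2-2\mathbf{e}_3$, and $\Omega=\lambda_3\mathbf{e}_1+\lambda_2\mathbf{e}_2+\lambda_1\mathbf{e}_3$. *)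

theory Defs
  imports Complex_Main
begin

(* 3-parameter generalized quaternions psi0 + psi1 e1 + psi2 e2 + psi3 e3 *)
datatype gq = GQ real real real real

fun gadd :: "gq \<Rightarrow> gq \<Rightarrow> gq" where
  "gadd (GQ a0 a1 a2 a3) (GQ b0 b1 b2 b3) = GQ (a0+b0) (a1+b1) (a2+b2) (a3+b3)"

fun gsub :: "gq \<Rightarrow> gq \<Rightarrow> gq" where
  "gsub (GQ a0 a1 a2 a3) (GQ b0 b1 b2 b3) = GQ (a0-b0) (a1-b1) (a2-b2) (a3-b3)"

fun gscale :: "real \<Rightarrow> gq \<Rightarrow> gq" where
  "gscale c (GQ a0 a1 a2 a3) = GQ (c*a0) (c*a1) (c*a2) (c*a3)"

(* multiplication in H_{l1,l2,l3}: bilinear extension of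
   e1^2=-l1 l2, e2^2=-l1 l3, e3^2=-l2 l3,
   e1e2=-e2e1=l1 e3, e1e3=-e3e1=-l2 e2, e2e3=-e3e2=l3 e1 *)
fun gmul :: "real \<Rightarrow> real \<Rightarrow> real \<Rightarrow> gq \<Rightarrow> gq \<Rightarrow> gq" where
  "gmul l1 l2 l3 (GQ a0 a1 a2 a3) (GQ b0 b1 b2 b3) =
     GQ (a0*b0 - l1*l2*a1*b1 - l1*l3*a2*b2 - l2*l3*a3*b3)
        (a0*b1 + a1*b0 + l3*(a2*b3 - a3*b2))
        (a0*b2 + a2*b0 - l2*(a1*b3 - a3*b1))
        (a0*b3 + a3*b0 + l1*(a1*b2 - a2*b1))"

definition X :: "int \<Rightarrow> real" where
  "X n = (if n mod 3 = 0 then 0 else if n mod 3 = 1 then 1 else -1)"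

(* third-order Jacobsthal and modified Jacobsthal numbers for all integers,
   via the Binet formulas *)
definition J3 :: "int \<Rightarrow> real" where
  "J3 n = (1/7) * (2 powi (n+1) + X n - 2 * X (n+1))"

definition K3 :: "int \<Rightarrow> real" where
  "K3 n = 2 powi n + X n + 2 * X (n+1)"

definition JG :: "int \<Rightarrow> gq" where
  "JG n = GQ (J3 n) (J3 (n+1)) (J3 (n+2)) (J3 (n+3))"

definition KG :: "int \<Rightarrow> gq" where
  "KG n = GQ (K3 n) (K3 (n+1)) (K3 (n+2)) (K3 (n+3))"

definition Theta :: gq where "Theta = GQ 1 2 4 8"
definition qA :: gq where "qA = GQ 1 2 (-3) 1"
definition qB :: gq where "qB = GQ 2 (-3) 1 2"
definition qC :: gq where "qC = GQ 1 (-2) 1 1"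
definition qD :: gq where "qD = GQ (-2) 1 1 (-2)"

definition Omega :: "real \<Rightarrow> real \<Rightarrow> real \<Rightarrow> gq" where
  "Omega l1 l2 l3 = GQ 0 l3 l2 l1"

definition Y :: "int \<Rightarrow> int \<Rightarrow> gq" where
  "Y n a = gsub
     (gscale (X n) (gsub (gadd (gscale (2 powi a) qA) (gscale (X (a+2)) qA)) (gscale (X a) qB)))
     (gscale (X (n+1)) (gsub (gadd (gscale (2 powi a) qB) (gscale (X a) qA)) (gscale (X (a+1)) qB)))"

definition Ystar :: "int \<Rightarrow> int \<Rightarrow> gq" where
  "Ystar n a = gsub
     (gscale (X n) (gsub (gadd (gscale (2 powi a) qC) (gscale (X (a+2)) qC)) (gscale (X a) qD)))
     (gscale (X (n+1)) (gsub (gadd (gscale (2 powi a) qD) (gscale (X a) qC)) (gscale (X (a+1)) qD)))"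

definition Xi :: "real \<Rightarrow> real \<Rightarrow> real \<Rightarrow> gq" where
  "Xi l1 l2 l3 = gadd (gadd (gmul l1 l2 l3 qA qA) (gmul l1 l2 l3 qA qB)) (gmul l1 l2 l3 qB qB)"

definition Xistar :: "real \<Rightarrow> real \<Rightarrow> real \<Rightarrow> gq" where
  "Xistar l1 l2 l3 = gadd (gadd (gmul l1 l2 l3 qC qC) (gmul l1 l2 l3 qC qD)) (gmul l1 l2 l3 qD qD)"

end

theory Submission imports Defs begin

lemma m1: "((c::int) + (3*k + m)) mod 3 = (c + m) mod 3" by presburger
lemma m2: "((c::int) + 3*k) mod 3 = c mod 3" by presburger
lemma m3: "((3::int)*k + m) mod 3 = m mod 3" by presburger
lemma m4: "((3::int)*k) mod 3 = 0" by presburger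
lemma m5: "(k::int) mod 3 = 0 \<Longrightarrow> (k + c) mod 3 = c mod 3" by presburger
lemma m6: "(k::int) mod 3 = 0 \<Longrightarrow> (c + k) mod 3 = c mod 3" by presburger
lemmas msimps = m1 m2 m3 m4 m5 m6

definition GJ :: "real \<Rightarrow> real \<Rightarrow> real \<Rightarrow> int \<Rightarrow> int \<Rightarrow> int \<Rightarrow> bool" where
  "GJ l1 l2 l3 n a b \<longleftrightarrow> (gsub (gmul l1 l2 l3 (JG (n+a)) (JG (n+b))) (gmul l1 l2 l3 (JG n) (JG (n+a+b))) =
           gscale (1/49)
             (gadd
               (gscale (2 powi (n+1))
                  (gsub (gmul l1 l2 l3 Theta (Y (n+b) a))
                        (gscale (2 powi b) (gmul l1 l2 l3 (Y n a) Theta))))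
               (gscale (X a) (gsub (gscale (X b) (Xi l1 l2 l3)) (gscale (14 * X (b+2)) (Omega l1 l2 l3))))))"
definition GK :: "real \<Rightarrow> real \<Rightarrow> real \<Rightarrow> int \<Rightarrow> int \<Rightarrow> int \<Rightarrow> bool" where
  "GK l1 l2 l3 n a b \<longleftrightarrow> (gsub (gmul l1 l2 l3 (KG (n+a)) (KG (n+b))) (gmul l1 l2 l3 (KG n) (KG (n+a+b))) =
           gadd
             (gscale (2 powi n)
                (gsub (gmul l1 l2 l3 Theta (Ystar (n+b) a))
                      (gscale (2 powi b) (gmul l1 l2 l3 (Ystar n a) Theta))))
             (gscale (X a) (gsub (gscale (X b) (Xistar l1 l2 l3)) (gscale (6 * X (b+2)) (Omega l1 l2 l3)))))"

lemma cJ_000: "GJ l1 l2 l3 (3*q) (3*r) (3*s)"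
  unfolding GJ_def
  by (simp add: JG_def J3_def X_def Y_def Xi_def Theta_def qA_def qB_def Omega_def power_int_add msimps; simp add: field_simps)
lemma cK_000: "GK l1 l2 l3 (3*q) (3*r) (3*s)"
  unfolding GK_def
  by (simp add: KG_def K3_def X_def Ystar_def Xistar_def Theta_def qC_def qD_def Omega_def power_int_add msimps; simp add: field_simps)

lemma cJ_001: "GJ l1 l2 l3 (3*q) (3*r) (3*s+1)"
  unfolding GJ_def
  by (simp add: JG_def J3_def X_def Y_def Xi_def Theta_def qA_def qB_def Omega_def power_int_add msimps; simp add: field_simps)
lemma cK_001: "GK l1 l2 l3 (3*q) (3*r) (3*s+1)"
  unfolding GK_def
  by (simp add: KG_def K3_def X_def Ystar_def Xistar_def Theta_def qC_def qD_def Omega_def power_int_add msimps; simp add: field_simps)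

lemma cJ_002: "GJ l1 l2 l3 (3*q) (3*r) (3*s+2)"
  unfolding GJ_def
  by (simp add: JG_def J3_def X_def Y_def Xi_def Theta_def qA_def qB_def Omega_def power_int_add msimps; simp add: field_simps)
lemma cK_002: "GK l1 l2 l3 (3*q) (3*r) (3*s+2)"
  unfolding GK_def
  by (simp add: KG_def K3_def X_def Ystar_def Xistar_def Theta_def qC_def qD_def Omega_def power_int_add msimps; simp add: field_simps)

lemma cJ_010: "GJ l1 l2 l3 (3*q) (3*r+1) (3*s)"
  unfolding GJ_def
  by (simp add: JG_def J3_def X_def Y_def Xi_def Theta_def qA_def qB_def Omega_def power_int_add msimps; simp add: field_simps)
lemma cK_010: "GK l1 l2 l3 (3*q) (3*r+1) (3*s)"
  unfolding GK_def
  by (simp add: KG_def K3_def X_def Ystar_def Xistar_def Theta_def qC_def qD_def Omega_def power_int_add msimps; simp add: field_simps)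

lemma cJ_011: "GJ l1 l2 l3 (3*q) (3*r+1) (3*s+1)"
  unfolding GJ_def
  by (simp add: JG_def J3_def X_def Y_def Xi_def Theta_def qA_def qB_def Omega_def power_int_add msimps; simp add: field_simps)
lemma cK_011: "GK l1 l2 l3 (3*q) (3*r+1) (3*s+1)"
  unfolding GK_def
  by (simp add: KG_def K3_def X_def Ystar_def Xistar_def Theta_def qC_def qD_def Omega_def power_int_add msimps; simp add: field_simps)

lemma cJ_012: "GJ l1 l2 l3 (3*q) (3*r+1) (3*s+2)"
  unfolding GJ_def
  by (simp add: JG_def J3_def X_def Y_def Xi_def Theta_def qA_def qB_def Omega_def power_int_add msimps; simp add: field_simps)
lemma cK_012: "GK l1 l2 l3 (3*q) (3*r+1) (3*s+2)"
  unfolding GK_def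
  by (simp add: KG_def K3_def X_def Ystar_def Xistar_def Theta_def qC_def qD_def Omega_def power_int_add msimps; simp add: field_simps)

lemma cJ_020: "GJ l1 l2 l3 (3*q) (3*r+2) (3*s)"
  unfolding GJ_def
  by (simp add: JG_def J3_def X_def Y_def Xi_def Theta_def qA_def qB_def Omega_def power_int_add msimps; simp add: field_simps)
lemma cK_020: "GK l1 l2 l3 (3*q) (3*r+2) (3*s)"
  unfolding GK_def
  by (simp add: KG_def K3_def X_def Ystar_def Xistar_def Theta_def qC_def qD_def Omega_def power_int_add msimps; simp add: field_simps)

lemma cJ_021: "GJ l1 l2 l3 (3*q) (3*r+2) (3*s+1)"
  unfolding GJ_def
  by (simp add: JG_def J3_def X_def Y_def Xi_def Theta_def qA_def qB_def Omega_def power_int_add msimps; simp add: field_simps)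
lemma cK_021: "GK l1 l2 l3 (3*q) (3*r+2) (3*s+1)"
  unfolding GK_def
  by (simp add: KG_def K3_def X_def Ystar_def Xistar_def Theta_def qC_def qD_def Omega_def power_int_add msimps; simp add: field_simps)

lemma cJ_022: "GJ l1 l2 l3 (3*q) (3*r+2) (3*s+2)"
  unfolding GJ_def
  by (simp add: JG_def J3_def X_def Y_def Xi_def Theta_def qA_def qB_def Omega_def power_int_add msimps; simp add: field_simps)
lemma cK_022: "GK l1 l2 l3 (3*q) (3*r+2) (3*s+2)"
  unfolding GK_def
  by (simp add: KG_def K3_def X_def Ystar_def Xistar_def Theta_def qC_def qD_def Omega_def power_int_add msimps; simp add: field_simps)

lemma cJ_100: "GJ l1 l2 l3 (3*q+1) (3*r) (3*s)"
  unfolding GJ_def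
  by (simp add: JG_def J3_def X_def Y_def Xi_def Theta_def qA_def qB_def Omega_def power_int_add msimps; simp add: field_simps)
lemma cK_100: "GK l1 l2 l3 (3*q+1) (3*r) (3*s)"
  unfolding GK_def
  by (simp add: KG_def K3_def X_def Ystar_def Xistar_def Theta_def qC_def qD_def Omega_def power_int_add msimps; simp add: field_simps)

lemma cJ_101: "GJ l1 l2 l3 (3*q+1) (3*r) (3*s+1)"
  unfolding GJ_def
  by (simp add: JG_def J3_def X_def Y_def Xi_def Theta_def qA_def qB_def Omega_def power_int_add msimps; simp add: field_simps)
lemma cK_101: "GK l1 l2 l3 (3*q+1) (3*r) (3*s+1)"
  unfolding GK_def
  by (simp add: KG_def K3_def X_def Ystar_def Xistar_def Theta_def qC_def qD_def Omega_def power_int_add msimps; simp add: field_simps)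

lemma cJ_102: "GJ l1 l2 l3 (3*q+1) (3*r) (3*s+2)"
  unfolding GJ_def
  by (simp add: JG_def J3_def X_def Y_def Xi_def Theta_def qA_def qB_def Omega_def power_int_add msimps; simp add: field_simps)
lemma cK_102: "GK l1 l2 l3 (3*q+1) (3*r) (3*s+2)"
  unfolding GK_def
  by (simp add: KG_def K3_def X_def Ystar_def Xistar_def Theta_def qC_def qD_def Omega_def power_int_add msimps; simp add: field_simps)

lemma cJ_110: "GJ l1 l2 l3 (3*q+1) (3*r+1) (3*s)"
  unfolding GJ_def
  by (simp add: JG_def J3_def X_def Y_def Xi_def Theta_def qA_def qB_def Omega_def power_int_add msimps; simp add: field_simps)
lemma cK_110: "GK l1 l2 l3 (3*q+1) (3*r+1) (3*s)"
  unfolding GK_def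
  by (simp add: KG_def K3_def X_def Ystar_def Xistar_def Theta_def qC_def qD_def Omega_def power_int_add msimps; simp add: field_simps)

lemma cJ_111: "GJ l1 l2 l3 (3*q+1) (3*r+1) (3*s+1)"
  unfolding GJ_def
  by (simp add: JG_def J3_def X_def Y_def Xi_def Theta_def qA_def qB_def Omega_def power_int_add msimps; simp add: field_simps)
lemma cK_111: "GK l1 l2 l3 (3*q+1) (3*r+1) (3*s+1)"
  unfolding GK_def
  by (simp add: KG_def K3_def X_def Ystar_def Xistar_def Theta_def qC_def qD_def Omega_def power_int_add msimps; simp add: field_simps)

lemma cJ_112: "GJ l1 l2 l3 (3*q+1) (3*r+1) (3*s+2)"
  unfolding GJ_def
  by (simp add: JG_def J3_def X_def Y_def Xi_def Theta_def qA_def qB_def Omega_def power_int_add msimps; simp add: field_simps)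
lemma cK_112: "GK l1 l2 l3 (3*q+1) (3*r+1) (3*s+2)"
  unfolding GK_def
  by (simp add: KG_def K3_def X_def Ystar_def Xistar_def Theta_def qC_def qD_def Omega_def power_int_add msimps; simp add: field_simps)

lemma cJ_120: "GJ l1 l2 l3 (3*q+1) (3*r+2) (3*s)"
  unfolding GJ_def
  by (simp add: JG_def J3_def X_def Y_def Xi_def Theta_def qA_def qB_def Omega_def power_int_add msimps; simp add: field_simps)
lemma cK_120: "GK l1 l2 l3 (3*q+1) (3*r+2) (3*s)"
  unfolding GK_def
  by (simp add: KG_def K3_def X_def Ystar_def Xistar_def Theta_def qC_def qD_def Omega_def power_int_add msimps; simp add: field_simps)

lemma cJ_121: "GJ l1 l2 l3 (3*q+1) (3*r+2) (3*s+1)"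
  unfolding GJ_def
  by (simp add: JG_def J3_def X_def Y_def Xi_def Theta_def qA_def qB_def Omega_def power_int_add msimps; simp add: field_simps)
lemma cK_121: "GK l1 l2 l3 (3*q+1) (3*r+2) (3*s+1)"
  unfolding GK_def
  by (simp add: KG_def K3_def X_def Ystar_def Xistar_def Theta_def qC_def qD_def Omega_def power_int_add msimps; simp add: field_simps)

lemma cJ_122: "GJ l1 l2 l3 (3*q+1) (3*r+2) (3*s+2)"
  unfolding GJ_def
  by (simp add: JG_def J3_def X_def Y_def Xi_def Theta_def qA_def qB_def Omega_def power_int_add msimps; simp add: field_simps)
lemma cK_122: "GK l1 l2 l3 (3*q+1) (3*r+2) (3*s+2)"
  unfolding GK_def
  by (simp add: KG_def K3_def X_def Ystar_def Xistar_def Theta_def qC_def qD_def Omega_def power_int_add msimps; simp add: field_simps)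

lemma cJ_200: "GJ l1 l2 l3 (3*q+2) (3*r) (3*s)"
  unfolding GJ_def
  by (simp add: JG_def J3_def X_def Y_def Xi_def Theta_def qA_def qB_def Omega_def power_int_add msimps; simp add: field_simps)
lemma cK_200: "GK l1 l2 l3 (3*q+2) (3*r) (3*s)"
  unfolding GK_def
  by (simp add: KG_def K3_def X_def Ystar_def Xistar_def Theta_def qC_def qD_def Omega_def power_int_add msimps; simp add: field_simps)

lemma cJ_201: "GJ l1 l2 l3 (3*q+2) (3*r) (3*s+1)"
  unfolding GJ_def
  by (simp add: JG_def J3_def X_def Y_def Xi_def Theta_def qA_def qB_def Omega_def power_int_add msimps; simp add: field_simps)
lemma cK_201: "GK l1 l2 l3 (3*q+2) (3*r) (3*s+1)"
  unfolding GK_def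
  by (simp add: KG_def K3_def X_def Ystar_def Xistar_def Theta_def qC_def qD_def Omega_def power_int_add msimps; simp add: field_simps)

lemma cJ_202: "GJ l1 l2 l3 (3*q+2) (3*r) (3*s+2)"
  unfolding GJ_def
  by (simp add: JG_def J3_def X_def Y_def Xi_def Theta_def qA_def qB_def Omega_def power_int_add msimps; simp add: field_simps)
lemma cK_202: "GK l1 l2 l3 (3*q+2) (3*r) (3*s+2)"
  unfolding GK_def
  by (simp add: KG_def K3_def X_def Ystar_def Xistar_def Theta_def qC_def qD_def Omega_def power_int_add msimps; simp add: field_simps)

lemma cJ_210: "GJ l1 l2 l3 (3*q+2) (3*r+1) (3*s)"
  unfolding GJ_def
  by (simp add: JG_def J3_def X_def Y_def Xi_def Theta_def qA_def qB_def Omega_def power_int_add msimps; simp add: field_simps)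
lemma cK_210: "GK l1 l2 l3 (3*q+2) (3*r+1) (3*s)"
  unfolding GK_def
  by (simp add: KG_def K3_def X_def Ystar_def Xistar_def Theta_def qC_def qD_def Omega_def power_int_add msimps; simp add: field_simps)

lemma cJ_211: "GJ l1 l2 l3 (3*q+2) (3*r+1) (3*s+1)"
  unfolding GJ_def
  by (simp add: JG_def J3_def X_def Y_def Xi_def Theta_def qA_def qB_def Omega_def power_int_add msimps; simp add: field_simps)
lemma cK_211: "GK l1 l2 l3 (3*q+2) (3*r+1) (3*s+1)"
  unfolding GK_def
  by (simp add: KG_def K3_def X_def Ystar_def Xistar_def Theta_def qC_def qD_def Omega_def power_int_add msimps; simp add: field_simps)

lemma cJ_212: "GJ l1 l2 l3 (3*q+2) (3*r+1) (3*s+2)"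
  unfolding GJ_def
  by (simp add: JG_def J3_def X_def Y_def Xi_def Theta_def qA_def qB_def Omega_def power_int_add msimps; simp add: field_simps)
lemma cK_212: "GK l1 l2 l3 (3*q+2) (3*r+1) (3*s+2)"
  unfolding GK_def
  by (simp add: KG_def K3_def X_def Ystar_def Xistar_def Theta_def qC_def qD_def Omega_def power_int_add msimps; simp add: field_simps)

lemma cJ_220: "GJ l1 l2 l3 (3*q+2) (3*r+2) (3*s)"
  unfolding GJ_def
  by (simp add: JG_def J3_def X_def Y_def Xi_def Theta_def qA_def qB_def Omega_def power_int_add msimps; simp add: field_simps)
lemma cK_220: "GK l1 l2 l3 (3*q+2) (3*r+2) (3*s)"
  unfolding GK_def
  by (simp add: KG_def K3_def X_def Ystar_def Xistar_def Theta_def qC_def qD_def Omega_def power_int_add msimps; simp add: field_simps)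

lemma cJ_221: "GJ l1 l2 l3 (3*q+2) (3*r+2) (3*s+1)"
  unfolding GJ_def
  by (simp add: JG_def J3_def X_def Y_def Xi_def Theta_def qA_def qB_def Omega_def power_int_add msimps; simp add: field_simps)
lemma cK_221: "GK l1 l2 l3 (3*q+2) (3*r+2) (3*s+1)"
  unfolding GK_def
  by (simp add: KG_def K3_def X_def Ystar_def Xistar_def Theta_def qC_def qD_def Omega_def power_int_add msimps; simp add: field_simps)

lemma cJ_222: "GJ l1 l2 l3 (3*q+2) (3*r+2) (3*s+2)"
  unfolding GJ_def
  by (simp add: JG_def J3_def X_def Y_def Xi_def Theta_def qA_def qB_def Omega_def power_int_add msimps; simp add: field_simps)
lemma cK_222: "GK l1 l2 l3 (3*q+2) (3*r+2) (3*s+2)"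
  unfolding GK_def
  by (simp add: KG_def K3_def X_def Ystar_def Xistar_def Theta_def qC_def qD_def Omega_def power_int_add msimps; simp add: field_simps)

lemma cases3:
  fixes i j k :: int
  assumes "i \<in> {0,1,2}" "j \<in> {0,1,2}" "k \<in> {0,1,2}"
  shows "GJ l1 l2 l3 (3*q+i) (3*r+j) (3*s+k) \<and> GK l1 l2 l3 (3*q+i) (3*r+j) (3*s+k)"
  using assms by (auto simp add: cJ_000 cK_000 cJ_001 cK_001 cJ_002 cK_002 cJ_010 cK_010 cJ_011 cK_011 cJ_012 cK_012 cJ_020 cK_020 cJ_021 cK_021 cJ_022 cK_022 cJ_100 cK_100 cJ_101 cK_101 cJ_102 cK_102 cJ_110 cK_110 cJ_111 cK_111 cJ_112 cK_112 cJ_120 cK_120 cJ_121 cK_121 cJ_122 cK_122 cJ_200 cK_200 cJ_201 cK_201 cJ_202 cK_202 cJ_210 cK_210 cJ_211 cK_211 cJ_212 cK_212 cJ_220 cK_220 cJ_221 cK_221 cJ_222 cK_222)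

lemma dec: "(n::int) = 3 * (n div 3) + n mod 3 \<and> n mod 3 \<in> {0,1,2}"
  by auto

theorem theorem3p1:
  fixes l1 l2 l3 :: real and n a b :: int
  shows "(gsub (gmul l1 l2 l3 (JG (n+a)) (JG (n+b))) (gmul l1 l2 l3 (JG n) (JG (n+a+b))) =
           gscale (1/49)
             (gadd
               (gscale (2 powi (n+1))
                  (gsub (gmul l1 l2 l3 Theta (Y (n+b) a))
                        (gscale (2 powi b) (gmul l1 l2 l3 (Y n a) Theta))))
               (gscale (X a) (gsub (gscale (X b) (Xi l1 l2 l3)) (gscale (14 * X (b+2)) (Omega l1 l2 l3)))))) \<and>
        (gsub (gmul l1 l2 l3 (KG (n+a)) (KG (n+b))) (gmul l1 l2 l3 (KG n) (KG (n+a+b))) =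
           gadd
             (gscale (2 powi n)
                (gsub (gmul l1 l2 l3 Theta (Ystar (n+b) a))
                      (gscale (2 powi b) (gmul l1 l2 l3 (Ystar n a) Theta))))
             (gscale (X a) (gsub (gscale (X b) (Xistar l1 l2 l3)) (gscale (6 * X (b+2)) (Omega l1 l2 l3)))))"
proof -
  have n: "n = 3 * (n div 3) + n mod 3" "n mod 3 \<in> {0,1,2}" using dec by blast+
  have a: "a = 3 * (a div 3) + a mod 3" "a mod 3 \<in> {0,1,2}" using dec by blast+
  have b: "b = 3 * (b div 3) + b mod 3" "b mod 3 \<in> {0,1,2}" using dec by blast+
  have "GJ l1 l2 l3 n a b \<and> GK l1 l2 l3 n a b"
    using cases3[OF n(2) a(2) b(2), of l1 l2 l3 "n div 3" "a div 3" "b div 3"]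
    by (simp only: n(1)[symmetric] a(1)[symmetric] b(1)[symmetric])
  then show ?thesis unfolding GJ_def GK_def .
qed

end
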